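(* Let $n\ge 3$ and let $DW_n$ be the double wheel graph. Then $$\chi^+(DW_n)=\begin{cases}5n+1 & \text{if } n \text{ is even},\\ 7n-2 & \text{if } n \text{ is odd}.\end{cases}$$
   Context: The double wheel graph $DW_n=2C_n+K_1$ is obtained from the disjoint union of two cycles $C_n$ by adding one new vertex adjacent to every vertex of both cycles. For a proper colouring $c:V(G)\to\{1,\dots,k\}$ of a graph $G$ (colour $c_i$ identified with the integer $i$), its colouring sum is $\sum_{i=1}^k i\,\theta(c_i)=\sum_{v\in V(G)} c(v)$, where $\theta(c_i)$ is the number of vertices receiving colour $c_i$. The $\chi^+$-chromatic sum $\chi^+(G)$ is the maximum of the colouring sum over all proper colourings of $G$ using exactly $\chi(G)$ colours (the chromatic number), i.e. over all proper colourings $c:V(G)\to\{1,\dots,\chi(G)\}$. *)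

theory Defs
  imports Main
begin

definition proper_colouring :: "'a set \<Rightarrow> ('a \<Rightarrow> 'a \<Rightarrow> bool) \<Rightarrow> nat \<Rightarrow> ('a \<Rightarrow> nat) \<Rightarrow> bool" where
  "proper_colouring V E k c \<longleftrightarrow>
     (\<forall>v\<in>V. c v \<in> {1..k}) \<and> (\<forall>u\<in>V. \<forall>v\<in>V. E u v \<longrightarrow> c u \<noteq> c v)"

definition chromatic_number :: "'a set \<Rightarrow> ('a \<Rightarrow> 'a \<Rightarrow> bool) \<Rightarrow> nat" where
  "chromatic_number V E = (LEAST k. \<exists>c. proper_colouring V E k c)"

definition chi_plus :: "'a set \<Rightarrow> ('a \<Rightarrow> 'a \<Rightarrow> bool) \<Rightarrow> nat" where
  "chi_plus V E = Max {(\<Sum>v\<in>V. c v) | c. proper_colouring V E (chromatic_number V E) c}"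

text \<open>Double wheel DW_n: hub None, cycle vertices Some (b, i) with b selecting the cycle, i < n.\<close>
definition dw_vertices :: "nat \<Rightarrow> (bool \<times> nat) option set" where
  "dw_vertices n = {None} \<union> {Some (b, i) | b i. i < n}"

definition dw_adj :: "nat \<Rightarrow> (bool \<times> nat) option \<Rightarrow> (bool \<times> nat) option \<Rightarrow> bool" where
  "dw_adj n u v = (case (u, v) of
      (None, None) \<Rightarrow> False
    | (None, Some _) \<Rightarrow> True
    | (Some _, None) \<Rightarrow> True
    | (Some (b, i), Some (b', j)) \<Rightarrow>
        b = b' \<and> (j = (i + 1) mod n \<or> i = (j + 1) mod n))"

end

theory Submission
  imports Defs
begin

lemma indep_bound:
  fixes n :: nat and I :: "nat set"
  assumes "I \<subseteq> {..<n}" "\<forall>i\<in>I. (i+1) mod n \<notin> I" "n > 0"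
  shows "2 * card I \<le> n"
proof -
  let ?s = "\<lambda>i. (i+1) mod n"
  have m: "(i+1) mod n = (if i+1 = n then 0 else i+1)" if "i < n" for i
    using that by auto
  have inj: "inj_on ?s {..<n}"
    unfolding inj_on_def using m assms(3) by (auto split: if_splits)
  have c: "card (?s ` I) = card I"
    by (rule card_image) (rule inj_on_subset[OF inj assms(1)])
  have sub: "I \<union> ?s ` I \<subseteq> {..<n}" using assms by auto
  have disj: "I \<inter> ?s ` I = {}" using assms(2) by auto
  have fin: "finite I" using assms(1) finite_subset by blast
  have "card (I \<union> ?s ` I) \<le> n" using card_mono[OF _ sub] by simp
  moreover have "card (I \<union> ?s ` I) = card I + card (?s ` I)"
    using card_Un_disjoint[OF fin _ disj] fin by simp
  ultimately show ?thesis using c by simp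
qed

lemma sum_by_value:
  assumes "finite I" "\<forall>i\<in>I. f i \<in> S" "finite S"
  shows "sum g I = (\<Sum>j\<in>S. sum g {i\<in>I. f i = j})"
proof -
  have "sum g I = (\<Sum>j\<in>f ` I. sum g {i. i\<in>I \<and> f i = j})"
    by (rule sum.image_gen[OF assms(1)])
  also have "\<dots> = (\<Sum>j\<in>S. sum g {i\<in>I. f i = j})"
  proof (rule sum.mono_neutral_left)
    show "\<forall>j\<in>S - f ` I. sum g {i\<in>I. f i = j} = 0"
    proof
      fix j assume "j \<in> S - f ` I"
      then have "{i\<in>I. f i = j} = {}" by auto
      then show "sum g {i\<in>I. f i = j} = 0" by (metis sum.empty)
    qed
  qed (use assms in auto)
  finally show ?thesis .
qed

lemma cycle_props:
  fixes f :: "nat \<Rightarrow> nat"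
  assumes n: "n > 0"
    and rng: "\<forall>i<n. f i \<in> {1..k}"
    and hub: "\<forall>i<n. f i \<noteq> h"
    and adj: "\<forall>i<n. f i \<noteq> f ((i+1) mod n)"
  shows "\<forall>j. 2 * card {i\<in>{..<n}. f i = j} \<le> n"
    and "card {i\<in>{..<n}. f i = h} = 0"
    and "(\<Sum>j\<in>{1..k}. card {i\<in>{..<n}. f i = j}) = n"
    and "(\<Sum>i<n. f i) = (\<Sum>j\<in>{1..k}. j * card {i\<in>{..<n}. f i = j})"
proof -
  show "\<forall>j. 2 * card {i\<in>{..<n}. f i = j} \<le> n"
  proof
    fix j
    show "2 * card {i\<in>{..<n}. f i = j} \<le> n"
      by (rule indep_bound) (use adj n in auto)
  qed
  show "card {i\<in>{..<n}. f i = h} = 0" using hub by auto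
  have "(\<Sum>i<n. (1::nat)) = (\<Sum>j\<in>{1..k}. sum (\<lambda>_. 1) {i\<in>{..<n}. f i = j})"
    by (rule sum_by_value) (use rng in auto)
  then show "(\<Sum>j\<in>{1..k}. card {i\<in>{..<n}. f i = j}) = n" by simp
  have "(\<Sum>i<n. f i) = (\<Sum>j\<in>{1..k}. sum f {i\<in>{..<n}. f i = j})"
    by (rule sum_by_value) (use rng in auto)
  also have "\<dots> = (\<Sum>j\<in>{1..k}. j * card {i\<in>{..<n}. f i = j})"
  proof (rule sum.cong)
    fix j assume "j \<in> {1..k}"
    have "sum f {i\<in>{..<n}. f i = j} = sum (\<lambda>_. j) {i\<in>{..<n}. f i = j}"
      by (rule sum.cong) auto
    then show "sum f {i\<in>{..<n}. f i = j} = j * card {i\<in>{..<n}. f i = j}" by simp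
  qed simp
  finally show "(\<Sum>i<n. f i) = (\<Sum>j\<in>{1..k}. j * card {i\<in>{..<n}. f i = j})" .
qed

lemma sum3: "(\<Sum>j\<in>{1..3::nat}. g j) = g 1 + g 2 + g (3::nat)"
  by (simp add: numeral_eq_Suc atLeastAtMostSuc_conv add.commute add.left_commute)

lemma sum4: "(\<Sum>j\<in>{1..4::nat}. g j) = g 1 + g 2 + g 3 + g (4::nat)"
  by (simp add: numeral_eq_Suc atLeastAtMostSuc_conv add.commute add.left_commute)

lemma sum2: "(\<Sum>j\<in>{1..2::nat}. g j) = g 1 + g (2::nat)"
  by (simp add: numeral_eq_Suc atLeastAtMostSuc_conv add.commute add.left_commute)

lemma dw_sum:
  "sum g (dw_vertices n) = g None + (\<Sum>i<n. g (Some (True, i))) + (\<Sum>i<n. g (Some (False, i)))"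
proof -
  have V: "dw_vertices n = insert None (Some ` (Pair True ` {..<n} \<union> Pair False ` {..<n}))"
    unfolding dw_vertices_def by auto
  have "sum g (Some ` (Pair True ` {..<n} \<union> Pair False ` {..<n}))
      = sum (g \<circ> Some) (Pair True ` {..<n} \<union> Pair False ` {..<n})"
    by (rule sum.reindex) simp
  also have "\<dots> = sum (g \<circ> Some) (Pair True ` {..<n}) + sum (g \<circ> Some) (Pair False ` {..<n})"
    by (rule sum.union_disjoint) auto
  also have "\<dots> = (\<Sum>i<n. g (Some (True, i))) + (\<Sum>i<n. g (Some (False, i)))"
    by (simp add: sum.reindex inj_on_def)
  finally show ?thesis unfolding V by (subst sum.insert) (auto simp: add.assoc)
qed


lemma pc_facts:
  assumes pc: "proper_colouring (dw_vertices n) (dw_adj n) k c" and i: "i < n"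
  shows "c None \<in> {1..k}" "c (Some (b,i)) \<in> {1..k}" "c (Some (b,i)) \<noteq> c None"
    "c (Some (b,i)) \<noteq> c (Some (b, (i+1) mod n))"
proof -
  have m1: "None \<in> dw_vertices n" "Some (b,i) \<in> dw_vertices n"
    "Some (b,(i+1) mod n) \<in> dw_vertices n"
    using i by (auto simp: dw_vertices_def)
  have a1: "dw_adj n (Some (b,i)) None" "dw_adj n (Some (b,i)) (Some (b,(i+1) mod n))"
    by (auto simp: dw_adj_def)
  show "c None \<in> {1..k}" "c (Some (b,i)) \<in> {1..k}" "c (Some (b,i)) \<noteq> c None"
    "c (Some (b,i)) \<noteq> c (Some (b, (i+1) mod n))"
    using pc m1 a1 unfolding proper_colouring_def by blast+
qed

lemma pc_counts:
  assumes pc: "proper_colouring (dw_vertices n) (dw_adj n) k c" and n: "n \<ge> 3"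
  shows "\<forall>j. 2 * card {i\<in>{..<n}. c (Some (b,i)) = j} \<le> n"
    and "card {i\<in>{..<n}. c (Some (b,i)) = c None} = 0"
    and "(\<Sum>j\<in>{1..k}. card {i\<in>{..<n}. c (Some (b,i)) = j}) = n"
    and "(\<Sum>i<n. c (Some (b,i))) = (\<Sum>j\<in>{1..k}. j * card {i\<in>{..<n}. c (Some (b,i)) = j})"
  using cycle_props[of n "\<lambda>i. c (Some (b,i))" k "c None"] pc_facts[OF pc] n by auto

lemma proper_mono:
  "proper_colouring V E k c \<Longrightarrow> k \<le> k' \<Longrightarrow> proper_colouring V E k' c"
  unfolding proper_colouring_def by auto

lemma no2:
  assumes pc: "proper_colouring (dw_vertices n) (dw_adj n) 2 c" and n: "n \<ge> 3"
  shows False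
proof -
  note C = pc_counts[OF pc n, of True]
  have h: "c None \<in> {1..2}" using pc_facts(1)[OF pc, of 0] n by auto
  let ?A = "\<lambda>j. card {i\<in>{..<n}. c (Some (True,i)) = j}"
  have s: "?A 1 + ?A 2 = n" using C(3) unfolding sum2 by simp
  have b: "2 * ?A 1 \<le> n" "2 * ?A 2 \<le> n" using C(1) by auto
  have "c None = 1 \<or> c None = 2" using h by auto
  then show False
  proof (elim disjE)
    assume "c None = 1" then have "?A 1 = 0" using C(2) by metis
    then show False using s b n by linarith
  next
    assume "c None = 2" then have "?A 2 = 0" using C(2) by metis
    then show False using s b n by linarith
  qed
qed

lemma no3odd:
  assumes pc: "proper_colouring (dw_vertices n) (dw_adj n) 3 c" and n: "n \<ge> 3" and o: "odd n"
  shows False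
proof -
  note C = pc_counts[OF pc n, of True]
  have h: "c None \<in> {1..3}" using pc_facts(1)[OF pc, of 0] n by auto
  let ?A = "\<lambda>j. card {i\<in>{..<n}. c (Some (True,i)) = j}"
  have s: "?A 1 + ?A 2 + ?A 3 = n" using C(3) unfolding sum3 by simp
  have b: "2 * ?A j + 1 \<le> n" for j
  proof -
    have "2 * ?A j \<le> n" using C(1) by auto
    moreover have "2 * ?A j \<noteq> n" using o by (metis dvd_triv_left)
    ultimately show ?thesis by linarith
  qed
  have "c None = 1 \<or> c None = 2 \<or> c None = 3" using h by auto
  then show False
  proof (elim disjE)
    assume "c None = 1" then have "?A 1 = 0" using C(2) by metis
    then show False using s b[of 2] b[of 3] n by linarith
  next
    assume "c None = 2" then have "?A 2 = 0" using C(2) by metis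
    then show False using s b[of 1] b[of 3] n by linarith
  next
    assume "c None = 3" then have "?A 3 = 0" using C(2) by metis
    then show False using s b[of 2] b[of 1] n by linarith
  qed
qed


lemma bound3:
  assumes pc: "proper_colouring (dw_vertices n) (dw_adj n) 3 c" and n: "n \<ge> 3"
  shows "sum c (dw_vertices n) \<le> 5 * n + 1"
proof -
  note T = pc_counts[OF pc n, of True] and F = pc_counts[OF pc n, of False]
  have h: "c None \<in> {1..3}" using pc_facts(1)[OF pc, of 0] n by auto
  define a1 where "a1 = card {i\<in>{..<n}. c (Some (True,i)) = 1}"
  define a2 where "a2 = card {i\<in>{..<n}. c (Some (True,i)) = 2}"
  define a3 where "a3 = card {i\<in>{..<n}. c (Some (True,i)) = 3}"
  define b1 where "b1 = card {i\<in>{..<n}. c (Some (False,i)) = 1}"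
  define b2 where "b2 = card {i\<in>{..<n}. c (Some (False,i)) = 2}"
  define b3 where "b3 = card {i\<in>{..<n}. c (Some (False,i)) = 3}"
  have sa: "a1 + a2 + a3 = n" using T(3) unfolding sum3 a1_def a2_def a3_def by simp
  have sb: "b1 + b2 + b3 = n" using F(3) unfolding sum3 b1_def b2_def b3_def by simp
  have ba: "2*a1 \<le> n" "2*a2 \<le> n" "2*a3 \<le> n" using T(1) unfolding a1_def a2_def a3_def by auto
  have bb: "2*b1 \<le> n" "2*b2 \<le> n" "2*b3 \<le> n" using F(1) unfolding b1_def b2_def b3_def by auto
  have st: "(\<Sum>i<n. c (Some (True,i))) = a1 + 2*a2 + 3*a3" using T(4) unfolding sum3 a1_def a2_def a3_def by simp
  have sf: "(\<Sum>i<n. c (Some (False,i))) = b1 + 2*b2 + 3*b3" using F(4) unfolding sum3 b1_def b2_def b3_def by simp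
  have tot: "sum c (dw_vertices n) = c None + (a1 + 2*a2 + 3*a3) + (b1 + 2*b2 + 3*b3)"
    using dw_sum[of c n] st sf by simp
  have "c None = 1 \<or> c None = 2 \<or> c None = 3" using h by auto
  then show ?thesis
  proof (elim disjE)
    assume e: "c None = 1" then have "a1 = 0" "b1 = 0" using T(2) F(2) unfolding a1_def b1_def by metis+
    then show ?thesis using e tot sa sb ba bb by linarith
  next
    assume e: "c None = 2" then have "a2 = 0" "b2 = 0" using T(2) F(2) unfolding a2_def b2_def by metis+
    then show ?thesis using e tot sa sb ba bb n by linarith
  next
    assume e: "c None = 3" then have "a3 = 0" "b3 = 0" using T(2) F(2) unfolding a3_def b3_def by metis+
    then show ?thesis using e tot sa sb ba bb n by linarith
  qed
qed

lemma bound4: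
  assumes pc: "proper_colouring (dw_vertices n) (dw_adj n) 4 c" and n: "n \<ge> 3" and o: "odd n"
  shows "sum c (dw_vertices n) + 2 \<le> 7 * n"
proof -
  note T = pc_counts[OF pc n, of True] and F = pc_counts[OF pc n, of False]
  have h: "c None \<in> {1..4}" using pc_facts(1)[OF pc, of 0] n by auto
  have odb: "2 * x + 1 \<le> n" if "2 * x \<le> n" for x
  proof -
    have "2 * x \<noteq> n" using o by (metis dvd_triv_left)
    then show ?thesis using that by linarith
  qed
  define a1 where "a1 = card {i\<in>{..<n}. c (Some (True,i)) = 1}"
  define a2 where "a2 = card {i\<in>{..<n}. c (Some (True,i)) = 2}"
  define a3 where "a3 = card {i\<in>{..<n}. c (Some (True,i)) = 3}"
  define a4 where "a4 = card {i\<in>{..<n}. c (Some (True,i)) = 4}"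
  define b1 where "b1 = card {i\<in>{..<n}. c (Some (False,i)) = 1}"
  define b2 where "b2 = card {i\<in>{..<n}. c (Some (False,i)) = 2}"
  define b3 where "b3 = card {i\<in>{..<n}. c (Some (False,i)) = 3}"
  define b4 where "b4 = card {i\<in>{..<n}. c (Some (False,i)) = 4}"
  have sa: "a1 + a2 + a3 + a4 = n" using T(3) unfolding sum4 a1_def a2_def a3_def a4_def by simp
  have sb: "b1 + b2 + b3 + b4 = n" using F(3) unfolding sum4 b1_def b2_def b3_def b4_def by simp
  have ba: "2*a1+1 \<le> n" "2*a2+1 \<le> n" "2*a3+1 \<le> n" "2*a4+1 \<le> n"
    using T(1) odb unfolding a1_def a2_def a3_def a4_def by blast+
  have bb: "2*b1+1 \<le> n" "2*b2+1 \<le> n" "2*b3+1 \<le> n" "2*b4+1 \<le> n"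
    using F(1) odb unfolding b1_def b2_def b3_def b4_def by blast+
  have st: "(\<Sum>i<n. c (Some (True,i))) = a1 + 2*a2 + 3*a3 + 4*a4" using T(4) unfolding sum4 a1_def a2_def a3_def a4_def by simp
  have sf: "(\<Sum>i<n. c (Some (False,i))) = b1 + 2*b2 + 3*b3 + 4*b4" using F(4) unfolding sum4 b1_def b2_def b3_def b4_def by simp
  have tot: "sum c (dw_vertices n) = c None + (a1 + 2*a2 + 3*a3 + 4*a4) + (b1 + 2*b2 + 3*b3 + 4*b4)"
    using dw_sum[of c n] st sf by simp
  have "c None = 1 \<or> c None = 2 \<or> c None = 3 \<or> c None = 4" using h by auto
  then show ?thesis
  proof (elim disjE)
    assume e: "c None = 1" then have "a1 = 0" "b1 = 0" using T(2) F(2) unfolding a1_def b1_def by metis+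
    then show ?thesis using e tot sa sb ba bb by linarith
  next
    assume e: "c None = 2" then have "a2 = 0" "b2 = 0" using T(2) F(2) unfolding a2_def b2_def by metis+
    then show ?thesis using e tot sa sb ba bb n by linarith
  next
    assume e: "c None = 3" then have "a3 = 0" "b3 = 0" using T(2) F(2) unfolding a3_def b3_def by metis+
    then show ?thesis using e tot sa sb ba bb n by linarith
  next
    assume e: "c None = 4" then have "a4 = 0" "b4 = 0" using T(2) F(2) unfolding a4_def b4_def by metis+
    then show ?thesis using e tot sa sb ba bb n by linarith
  qed
qed


lemma adj_cases:
  assumes "u \<in> dw_vertices n" "v \<in> dw_vertices n" "dw_adj n u v"
  shows "(u = None \<and> v \<noteq> None) \<or> (v = None \<and> u \<noteq> None) \<or>
    (\<exists>b i. i<n \<and> ((u = Some(b,i) \<and> v = Some(b,(i+1) mod n)) \<or> (v = Some(b,i) \<and> u = Some(b,(i+1) mod n))))"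
  using assms unfolding dw_vertices_def dw_adj_def
  by (auto split: option.splits prod.splits)

lemma proper_from:
  assumes "1 \<le> hc" "hc \<le> k" "\<forall>i<n. col i \<in> {1..k} \<and> col i \<noteq> hc \<and> col i \<noteq> col ((i+1) mod n)"
  shows "proper_colouring (dw_vertices n) (dw_adj n) k (\<lambda>v. case v of None \<Rightarrow> hc | Some (b,i) \<Rightarrow> col i)"
  unfolding proper_colouring_def
proof (intro conjI ballI impI)
  fix v assume "v \<in> dw_vertices n"
  then show "(case v of None \<Rightarrow> hc | Some (b,i) \<Rightarrow> col i) \<in> {1..k}"
    using assms unfolding dw_vertices_def by auto
next
  fix u v assume uv: "u \<in> dw_vertices n" "v \<in> dw_vertices n" "dw_adj n u v"
  have inr: "u \<noteq> None \<Longrightarrow> \<exists>b i. i < n \<and> u = Some (b,i)" "v \<noteq> None \<Longrightarrow> \<exists>b i. i < n \<and> v = Some (b,i)"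
    using uv(1,2) unfolding dw_vertices_def by auto
  have "(\<exists>b i. i<n \<and> ((u = Some(b,i) \<and> v = Some(b,(i+1) mod n)) \<or> (v = Some(b,i) \<and> u = Some(b,(i+1) mod n))))
    \<or> (u = None \<and> v \<noteq> None) \<or> (v = None \<and> u \<noteq> None)"
    using adj_cases[OF uv] by blast
  then show "(case u of None \<Rightarrow> hc | Some (b,i) \<Rightarrow> col i) \<noteq> (case v of None \<Rightarrow> hc | Some (b,i) \<Rightarrow> col i)"
  proof (elim disjE conjE exE)
    fix b i assume "i < n" "u = Some (b, i)" "v = Some (b, (i + 1) mod n)"
    then show ?thesis using assms by auto
  next
    fix b i assume "i < n" "v = Some (b, i)" "u = Some (b, (i + 1) mod n)"
    then show ?thesis using assms by fastforce
  next
    assume "u = None" "v \<noteq> None" then show ?thesis using inr assms by fastforce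
  next
    assume "v = None" "u \<noteq> None" then show ?thesis using inr assms by fastforce
  qed
qed

lemma alt_sum: "(\<Sum>i<2*m. (if even i then a else b)) = m * (a + b::nat)"
  by (induction m) (auto simp: algebra_simps)

lemma chi_even:
  assumes n: "n \<ge> 3" and e: "even n"
  shows "chi_plus (dw_vertices n) (dw_adj n) = 5 * n + 1"
proof -
  let ?col = "\<lambda>i::nat. if even i then 2 else (3::nat)"
  let ?c = "\<lambda>v. case v of None \<Rightarrow> 1 | Some (b,i) \<Rightarrow> ?col i"
  have colp: "\<forall>i<n. ?col i \<in> {1..3} \<and> ?col i \<noteq> 1 \<and> ?col i \<noteq> ?col ((i+1) mod n)"
  proof (intro allI impI)
    fix i assume i: "i < n"
    show "?col i \<in> {1..3} \<and> ?col i \<noteq> 1 \<and> ?col i \<noteq> ?col ((i+1) mod n)"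
    proof (cases "i + 1 < n")
      case True then show ?thesis by auto
    next
      case False then have "i + 1 = n" using i by auto
      then show ?thesis using e by auto
    qed
  qed
  have pc: "proper_colouring (dw_vertices n) (dw_adj n) 3 ?c"
    by (rule proper_from) (use colp in auto)
  have chi: "chromatic_number (dw_vertices n) (dw_adj n) = 3"
    unfolding chromatic_number_def
  proof (rule Least_equality)
    show "\<exists>c. proper_colouring (dw_vertices n) (dw_adj n) 3 c" using pc by blast
  next
    fix k assume "\<exists>c. proper_colouring (dw_vertices n) (dw_adj n) k c"
    then obtain c where c: "proper_colouring (dw_vertices n) (dw_adj n) k c" by blast
    show "3 \<le> k"
    proof (rule ccontr)
      assume "\<not> 3 \<le> k"
      then have "proper_colouring (dw_vertices n) (dw_adj n) 2 c" using proper_mono[OF c] by simp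
      then show False using no2 n by blast
    qed
  qed
  obtain m where m: "n = 2 * m" using e by blast
  have sc: "sum ?c (dw_vertices n) = 5 * n + 1"
    using dw_sum[of ?c n] alt_sum[where m=m and a=2 and b=3] m by simp
  let ?S = "{(\<Sum>v\<in>dw_vertices n. c v) | c. proper_colouring (dw_vertices n) (dw_adj n) 3 c}"
  have ub: "\<forall>y\<in>?S. y \<le> 5 * n + 1" using bound3 n by blast
  have fin: "finite ?S" by (rule finite_subset[of _ "{..5*n+1}"]) (use ub in auto)
  have mem: "5 * n + 1 \<in> ?S" using pc sc by force
  show ?thesis unfolding chi_plus_def chi
    by (rule Max_eqI[OF fin]) (use ub mem in auto)
qed

lemma chi_odd:
  assumes n: "n \<ge> 3" and o: "odd n"
  shows "chi_plus (dw_vertices n) (dw_adj n) = 7 * n - 2"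
proof -
  let ?col = "\<lambda>i::nat. if i = n - 1 then 2 else if even i then 4 else (3::nat)"
  let ?c = "\<lambda>v. case v of None \<Rightarrow> 1 | Some (b,i) \<Rightarrow> ?col i"
  obtain m where m: "n = 2 * m + 1" using o oddE by blast
  have colp: "\<forall>i<n. ?col i \<in> {1..4} \<and> ?col i \<noteq> 1 \<and> ?col i \<noteq> ?col ((i+1) mod n)"
  proof (intro allI impI)
    fix i assume i: "i < n"
    show "?col i \<in> {1..4} \<and> ?col i \<noteq> 1 \<and> ?col i \<noteq> ?col ((i+1) mod n)"
    proof (cases "i + 1 < n")
      case True
      then have j: "(i+1) mod n = i + 1" by simp
      show ?thesis
      proof (cases "i + 1 = n - 1")
        case True then have "odd i" using m by presburger
        then show ?thesis using j True by auto
      next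
        case False then show ?thesis using j \<open>i+1<n\<close> by auto
      qed
    next
      case False then have "i + 1 = n" using i by auto
      then show ?thesis using n by auto
    qed
  qed
  have pc: "proper_colouring (dw_vertices n) (dw_adj n) 4 ?c"
    by (rule proper_from) (use colp in auto)
  have chi: "chromatic_number (dw_vertices n) (dw_adj n) = 4"
    unfolding chromatic_number_def
  proof (rule Least_equality)
    show "\<exists>c. proper_colouring (dw_vertices n) (dw_adj n) 4 c" using pc by blast
  next
    fix k assume "\<exists>c. proper_colouring (dw_vertices n) (dw_adj n) k c"
    then obtain c where c: "proper_colouring (dw_vertices n) (dw_adj n) k c" by blast
    show "4 \<le> k"
    proof (rule ccontr)
      assume "\<not> 4 \<le> k"
      then have "proper_colouring (dw_vertices n) (dw_adj n) 3 c" using proper_mono[OF c] by simp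
      then show False using no3odd n o by blast
    qed
  qed
  have s1: "(\<Sum>i<n. ?col i) = 7 * m + 2"
  proof -
    have "(\<Sum>i<n. ?col i) = (\<Sum>i<2*m. ?col i) + ?col (2*m)"
      using m by simp
    also have "(\<Sum>i<2*m. ?col i) = (\<Sum>i<2*m. (if even i then 4 else (3::nat)))"
      by (rule sum.cong) (use m in auto)
    finally show ?thesis using alt_sum[where m=m and a=4 and b=3] m by simp
  qed
  have sc: "sum ?c (dw_vertices n) = 7 * n - 2"
    using dw_sum[of ?c n] s1 m by simp
  let ?S = "{(\<Sum>v\<in>dw_vertices n. c v) | c. proper_colouring (dw_vertices n) (dw_adj n) 4 c}"
  have ub: "\<forall>y\<in>?S. y \<le> 7 * n - 2" using bound4 n o by fastforce
  have fin: "finite ?S" by (rule finite_subset[of _ "{..7*n-2}"]) (use ub in auto)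
  have mem: "7 * n - 2 \<in> ?S" using pc sc by force
  show ?thesis unfolding chi_plus_def chi
    by (rule Max_eqI[OF fin]) (use ub mem in auto)
qed

theorem proposition2p2:
  fixes n :: nat
  assumes "n \<ge> 3"
  shows "chi_plus (dw_vertices n) (dw_adj n) = (if even n then 5 * n + 1 else 7 * n - 2)"
  using chi_even chi_odd assms by auto

end
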